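(* Let $\mathbf{M}_1,\dots,\mathbf{M}_L$ be nonsingular $D\times D$ integer matrices that are pairwise commutative and coprime, and let $\mathbf{R}=\mathbf{M}_1\cdots\mathbf{M}_L\mathbf{U}$ with $\mathbf{U}$ any unimodular matrix (such $\mathbf{R}$ are lcrm's of the $\mathbf{M}_i$). Let $\mathbf{W}_i=\mathbf{M}_1\cdots\mathbf{M}_{i-1}\mathbf{M}_{i+1}\cdots\mathbf{M}_L$. Then there exist integer matrices $\widehat{\mathbf{W}}_i,\mathbf{Q}_i$ with $\mathbf{W}_i\widehat{\mathbf{W}}_i+\mathbf{M}_i\mathbf{Q}_i=\mathbf{I}$, and for any such choice every $\mathbf{m}\in\mathcal{N}(\mathbf{R})$ satisfies $\mathbf{m}=\big\langle\sum_{i=1}^L\mathbf{W}_i\widehat{\mathbf{W}}_i\langle\mathbf{m}\rangle_{\mathbf{M}_i}\big\rangle_{\mathbf{R}}$; in particular $\mathbf{m}\in\mathcal{N}(\mathbf{R})$ is uniquely determined by its remainders.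
   Context: All matrices are $D\times D$ integer matrices; unimodular means integer with determinant $\pm1$. Commuting nonsingular integer matrices are coprime if all their common left (equivalently right) divisors are unimodular, where $\mathbf{A}$ is a left divisor of $\mathbf{M}$ if $\mathbf{A}^{-1}\mathbf{M}$ is integer. An lcrm of $\mathbf{M}_1,\dots,\mathbf{M}_L$ is a nonsingular integer $\mathbf{R}=\mathbf{M}_i\mathbf{P}_i$ (integer $\mathbf{P}_i$, all $i$) such that every such common right multiple equals $\mathbf{R}\mathbf{A}$ for integer $\mathbf{A}$. $\mathcal{N}(\mathbf{M})=\{\mathbf{k}\in\mathbb{Z}^D:\mathbf{k}=\mathbf{M}\mathbf{x},\ \mathbf{x}\in[0,1)^D\}$; $\langle\mathbf{m}\rangle_{\mathbf{M}}$ is the unique $\mathbf{r}\in\mathcal{N}(\mathbf{M})$ with $\mathbf{m}-\mathbf{r}\in\mathbf{M}\mathbb{Z}^D$. *)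

theory Defs
  imports "HOL-Analysis.Analysis"
begin

type_synonym 'n imat = "int ^ 'n ^ 'n"
type_synonym 'n ivec = "int ^ 'n"

definition nonsingular :: "'n::finite imat \<Rightarrow> bool" where
  "nonsingular A \<longleftrightarrow> det A \<noteq> 0"

definition unimodular :: "'n::finite imat \<Rightarrow> bool" where
  "unimodular A \<longleftrightarrow> det A = 1 \<or> det A = -1"

definition left_divisor :: "'n::finite imat \<Rightarrow> 'n imat \<Rightarrow> bool" where
  "left_divisor A M \<longleftrightarrow> nonsingular A \<and> (\<exists>P :: 'n imat. M = A ** P)"

definition mat_coprime :: "'n::finite imat \<Rightarrow> 'n imat \<Rightarrow> bool" where
  "mat_coprime A B \<longleftrightarrow> (\<forall>C. left_divisor C A \<and> left_divisor C B \<longrightarrow> unimodular C)"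

definition rvec :: "'n::finite ivec \<Rightarrow> real ^ 'n" where
  "rvec k = (\<chi> i. real_of_int (k $ i))"

definition rmat :: "'n::finite imat \<Rightarrow> real ^ 'n ^ 'n" where
  "rmat M = (\<chi> i j. real_of_int (M $ i $ j))"

definition fund :: "'n::finite imat \<Rightarrow> 'n ivec set" where
  "fund M = {k. \<exists>x :: real ^ 'n. (\<forall>i. 0 \<le> x $ i \<and> x $ i < 1) \<and> rvec k = rmat M *v x}"

definition rem :: "'n::finite imat \<Rightarrow> 'n ivec \<Rightarrow> 'n ivec" where
  "rem M m = (THE r. r \<in> fund M \<and> (\<exists>z :: 'n ivec. m - r = M *v z))"

definition mprod :: "(nat \<Rightarrow> 'n::finite imat) \<Rightarrow> nat list \<Rightarrow> 'n imat" where
  "mprod M is = foldr (\<lambda>i A. M i ** A) is (mat 1)"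

end

theory Submission
  imports Defs
begin



lemma det_rmat: "det (rmat M) = real_of_int (det M)"
  unfolding det_def rmat_def by (simp add: of_int_sum of_int_prod)

lemma rvec_mult: "rvec (M *v z) = rmat M *v rvec z"
  unfolding rvec_def rmat_def matrix_vector_mult_def by (simp add: of_int_sum)

lemma rvec_inj: "rvec a = rvec b \<Longrightarrow> a = b"
  unfolding rvec_def by (simp add: vec_eq_iff)

lemma rvec_diff: "rvec (a - b) = rvec a - rvec b"
  unfolding rvec_def by (simp add: vec_eq_iff)

lemma rvec_add: "rvec (a + b) = rvec a + rvec b"
  unfolding rvec_def by (simp add: vec_eq_iff)

lemma rvec_0: "rvec 0 = 0"
  unfolding rvec_def by (simp add: vec_eq_iff)

lemma rmat_inj_mult:
  assumes "nonsingular M" "rmat M *v x = rmat M *v y" shows "x = y"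
proof -
  have "invertible (rmat M)" using assms(1) by (simp add: invertible_det_nz det_rmat nonsingular_def)
  then obtain B where "B ** rmat M = mat 1" unfolding invertible_def by blast
  then have "B *v (rmat M *v x) = B *v (rmat M *v y)" using assms(2) by simp
  then show ?thesis using \<open>B ** rmat M = mat 1\<close> by (simp add: matrix_vector_mul_assoc)
qed

lemma rmat_solve:
  assumes "nonsingular M" shows "\<exists>x. rmat M *v x = b"
  using cramer[of "rmat M" _ b] assms by (auto simp: det_rmat nonsingular_def)




lemma fund_exists:
  assumes "nonsingular M" shows "\<exists>r\<in>fund M. \<exists>z. m - r = M *v z"
proof -
  obtain x where x: "rmat M *v x = rvec m" using rmat_solve[OF assms] by blast
  define f :: "int ^ 'a" where "f = (\<chi> i. \<lfloor>x$i\<rfloor>)"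
  define r where "r = m - M *v f"
  have "rvec r = rmat M *v (x - rvec f)"
    unfolding r_def rvec_diff rvec_mult by (simp add: x matrix_vector_mult_diff_distrib)
  moreover have "\<forall>i. 0 \<le> (x - rvec f) $ i \<and> (x - rvec f) $ i < 1"
  proof
    fix i
    have "(x - rvec f) $ i = x$i - of_int \<lfloor>x$i\<rfloor>" by (simp add: f_def rvec_def)
    then show "0 \<le> (x - rvec f) $ i \<and> (x - rvec f) $ i < 1"
      using floor_correct[of "x$i"] by linarith
  qed
  ultimately have "r \<in> fund M" unfolding fund_def by blast
  moreover have "m - r = M *v f" unfolding r_def by simp
  ultimately show ?thesis by blast
qed

lemma fund_unique:
  assumes "nonsingular M" "r \<in> fund M" "r' \<in> fund M" "m - r = M *v z" "m - r' = M *v z'"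
  shows "r = r'"
proof -
  obtain x where x: "\<forall>i. 0 \<le> x $ i \<and> x $ i < 1" "rvec r = rmat M *v x"
    using assms(2) unfolding fund_def by blast
  obtain x' where x': "\<forall>i. 0 \<le> x' $ i \<and> x' $ i < 1" "rvec r' = rmat M *v x'"
    using assms(3) unfolding fund_def by blast
  have "r' - r = M *v (z - z')" using assms(4,5) by (simp add: matrix_vector_mult_diff_distrib algebra_simps)
  then have "rmat M *v (x' - x) = rmat M *v rvec (z - z')"
  proof -
    have "rmat M *v (x' - x) = rvec r' - rvec r" using x x' by (simp add: matrix_vector_mult_diff_distrib)
    also have "\<dots> = rvec (r' - r)" by (simp add: rvec_diff)
    also have "\<dots> = rmat M *v rvec (z - z')" using \<open>r' - r = M *v (z - z')\<close> rvec_mult by metis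
    finally show ?thesis .
  qed
  then have e: "x' - x = rvec (z - z')" using rmat_inj_mult[OF assms(1)] by blast
  have "z - z' = 0"
  proof (subst vec_eq_iff, rule allI)
    fix i
    have a: "x'$i - x$i = real_of_int ((z - z')$i)" using e unfolding rvec_def by (simp add: vec_eq_iff)
    have "-1 < x'$i - x$i" "x'$i - x$i < 1" using x(1)[rule_format, of i] x'(1)[rule_format, of i] by linarith+
    then have "-1 < (z - z')$i" "(z - z')$i < 1" unfolding a by linarith+
    then show "(z - z')$i = 0$i" by simp
  qed
  then have "z = z'" by simp
  then have "m - r = m - r'" using assms(4,5) by simp
  then show ?thesis by simp
qed

lemma rem_prop:
  assumes "nonsingular M" shows "rem M m \<in> fund M \<and> (\<exists>z. m - rem M m = M *v z)"
  unfolding rem_def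
proof (rule theI')
  show "\<exists>!r. r \<in> fund M \<and> (\<exists>z. m - r = M *v z)"
  proof -
    obtain r z where "r \<in> fund M" "m - r = M *v z" using fund_exists[OF assms, of m] by blast
    moreover have "r' = r" if "r' \<in> fund M \<and> (\<exists>z. m - r' = M *v z)" for r'
      using that calculation fund_unique[OF assms] by blast
    ultimately show ?thesis by blast
  qed
qed

lemma rem_eqI:
  assumes "nonsingular M" "r \<in> fund M" "m - r = M *v z" shows "rem M m = r"
proof -
  obtain z' where "rem M m \<in> fund M" "m - rem M m = M *v z'" using rem_prop[OF assms(1), of m] by blast
  then show ?thesis using fund_unique[OF assms(1) _ assms(2) _ assms(3)] by blast
qed

lemma zero_fund: "0 \<in> fund M"
  unfolding fund_def by (rule CollectI, rule exI[of _ 0]) (simp add: rvec_0)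

lemma fund_finite:
  fixes M :: "'n::finite imat"
  shows "finite (fund M)"
proof -
  define B where "B = (\<Sum>i\<in>UNIV. \<Sum>j\<in>UNIV. \<bar>M$i$j\<bar>)"
  have "fund M \<subseteq> vec_lambda ` (PiE UNIV (\<lambda>_. {-B..B}))"
  proof
    fix k assume "k \<in> fund M"
    then obtain x where x: "\<forall>i. 0 \<le> x $ i \<and> x $ i < 1" "rvec k = rmat M *v x"
      unfolding fund_def by blast
    have "\<bar>k$i\<bar> \<le> B" for i
    proof -
      have "real_of_int (k$i) = (\<Sum>j\<in>UNIV. real_of_int (M$i$j) * x$j)"
        using x(2) unfolding rvec_def rmat_def matrix_vector_mult_def by (simp add: vec_eq_iff)
      then have "\<bar>real_of_int (k$i)\<bar> \<le> (\<Sum>j\<in>UNIV. \<bar>real_of_int (M$i$j) * x$j\<bar>)"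
        by (metis sum_abs)
      also have "\<dots> \<le> (\<Sum>j\<in>UNIV. real_of_int \<bar>M$i$j\<bar>)"
        apply (rule sum_mono) using x(1) by (simp add: abs_mult mult_left_le less_imp_le)
      also have "\<dots> \<le> real_of_int B"
        unfolding B_def of_int_sum
        by (rule member_le_sum) (auto intro: sum_nonneg)
      finally show ?thesis by linarith
    qed
    then have "vec_nth k \<in> PiE UNIV (\<lambda>_. {-B..B})" by (auto simp: abs_le_iff) (smt (verit))
    then show "k \<in> vec_lambda ` (PiE UNIV (\<lambda>_. {-B..B}))"
      by (intro image_eqI[where x="vec_nth k"]) simp_all
  qed
  moreover have "finite (PiE UNIV (\<lambda>_::'n. {-B..B}))" by (rule finite_PiE) auto
  ultimately show ?thesis by (meson finite_imageI finite_subset)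
qed




lemma mv_axis: "((A::int^'n::finite^'m) *v axis j 1) $ i = A $ i $ j"
  unfolding matrix_vector_mult_def axis_def by (simp add: if_distrib cong: if_cong)

lemma mm_cols: "((C::int^'n::finite^'m) ** (\<chi> i j. p j $ i)) $ i $ j = (C *v p j) $ i"
  unfolding matrix_matrix_mult_def matrix_vector_mult_def by simp

lemma mv_smult: "(A::int^'n::finite^'m) *v (c *s u) = c *s (A *v u)"
  unfolding matrix_vector_mult_def by (simp add: vec_eq_iff sum_distrib_left mult_ac)

lemma cols_factor:
  assumes "\<forall>j. \<exists>w. (A::int^'n::finite^'m) *v axis j 1 = C *v w"
  shows "\<exists>P. A = C ** P"
proof -
  obtain p where p: "\<And>j. A *v axis j 1 = C *v p j" using assms by metis
  have "A = C ** (\<chi> i j. p j $ i)"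
    by (simp add: vec_eq_iff mm_cols p[symmetric] mv_axis)
  then show ?thesis by blast
qed

lemma det_if_rmat:
  "det (\<chi> i j. if j = k then rvec v $ i else rmat U $ i $ j)
   = real_of_int (det (\<chi> i j. if j = k then v $ i else U $ i $ j))"
proof -
  have "(\<chi> i j. if j = k then rvec v $ i else rmat U $ i $ j) = rmat (\<chi> i j. if j = k then v $ i else U $ i $ j)"
    by (simp add: vec_eq_iff rvec_def rmat_def)
  then show ?thesis by (simp add: det_rmat)
qed

lemma unimodular_surj:
  fixes U :: "'n::finite imat"
  assumes "unimodular U" shows "\<exists>w. U *v w = v"
proof -
  have ns: "nonsingular U" using assms by (auto simp: unimodular_def nonsingular_def)
  define w where "w = (\<chi> k. det (\<chi> i j. if j = k then v $ i else U $ i $ j) * det U)"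
  have d: "det (rmat U) = 1 \<or> det (rmat U) = -1" using assms by (auto simp: unimodular_def det_rmat)
  have "rvec w = (\<chi> k. det(\<chi> i j. if j=k then rvec v $i else rmat U$i$j) / det (rmat U))"
    using d unfolding w_def det_if_rmat by (auto simp: rvec_def vec_eq_iff det_rmat)
  then have "rmat U *v rvec w = rvec v"
    using cramer[of "rmat U" "rvec w" "rvec v"] d by auto
  then have "U *v w = v" by (metis rvec_inj rvec_mult)
  then show ?thesis by blast
qed




lemma col_replace:
  "(\<chi> i j. if j = k then v $ i else C $ i $ j) *v z
   = (C::int^'n::finite^'n) *v (\<chi> j. if j = k then 0 else z $ j) + z $ k *s v"
  unfolding matrix_vector_mult_def
  by (simp add: vec_eq_iff if_distrib if_distribR sum.delta' mult.commute cong: if_cong)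
    (simp add: sum.If_cases Diff_eq[symmetric] sum.remove[of UNIV k] algebra_simps)

lemma bezout:
  fixes A B :: "'n::finite imat"
  assumes nA: "nonsingular A" and cp: "mat_coprime A B"
  shows "\<exists>X Y. A ** X + B ** Y = mat 1"
proof -
  define L where "L = {v. \<exists>x y. v = A *v x + B *v y}"
  have L_add: "u + v \<in> L" if uv: "u \<in> L" "v \<in> L" for u v
  proof -
    obtain x y x' y' where "u = A *v x + B *v y" "v = A *v x' + B *v y'" using uv unfolding L_def by blast
    then have "u + v = A *v (x + x') + B *v (y + y')" by (simp add: algebra_simps)
    then show ?thesis unfolding L_def by blast
  qed
  have L_diff: "u - v \<in> L" if uv: "u \<in> L" "v \<in> L" for u v
  proof -
    obtain x y x' y' where "u = A *v x + B *v y" "v = A *v x' + B *v y'" using uv unfolding L_def by blast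
    then have "u - v = A *v (x - x') + B *v (y - y')" by (simp add: algebra_simps)
    then show ?thesis unfolding L_def by blast
  qed
  have L_smult: "c *s u \<in> L" if uv: "u \<in> L" for u c
  proof -
    obtain x y where "u = A *v x + B *v y" using uv unfolding L_def by blast
    then have "c *s u = A *v (c *s x) + B *v (c *s y)" by (simp add: mv_smult vec_eq_iff algebra_simps)
    then show ?thesis unfolding L_def by blast
  qed
  define S where "S = {C. nonsingular C \<and> (\<forall>z. C *v z \<in> L)}"
  have "\<forall>z. A *v z = A *v z + B *v 0" by simp
  then have "A \<in> S" unfolding S_def L_def using nA by blast
  then obtain C where CS: "C \<in> S" and Cmin: "\<And>C'. C' \<in> S \<Longrightarrow> nat \<bar>det C\<bar> \<le> nat \<bar>det C'\<bar>"
    using ex_has_least_nat[of "\<lambda>C. C \<in> S" A "\<lambda>C. nat \<bar>det C\<bar>"] by blast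
  have nC: "nonsingular C" and CL: "\<And>z. C *v z \<in> L" using CS unfolding S_def by auto
  have span: "\<exists>w. v = C *v w" if vL: "v \<in> L" for v
  proof (rule ccontr)
    assume nw: "\<not> (\<exists>w. v = C *v w)"
    obtain x where x: "rmat C *v x = rvec v" using rmat_solve[OF nC] by blast
    define f :: "int ^ 'n" where "f = (\<chi> i. \<lfloor>x$i\<rfloor>)"
    have "\<exists>k. x$k \<noteq> of_int \<lfloor>x$k\<rfloor>"
    proof (rule ccontr)
      assume "\<not> ?thesis"
      then have "x = rvec f" by (simp add: vec_eq_iff f_def rvec_def)
      then have "v = C *v f" using x by (metis rvec_inj rvec_mult)
      then show False using nw by blast
    qed
    then obtain k where k: "x$k \<noteq> of_int \<lfloor>x$k\<rfloor>" by blast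
    define v' where "v' = v - C *v f"
    define x' where "x' = x - rvec f"
    have v'x': "rvec v' = rmat C *v x'" unfolding v'_def x'_def rvec_diff rvec_mult
      by (simp add: x matrix_vector_mult_diff_distrib)
    have xk: "0 < x'$k" "x'$k < 1" using k floor_correct[of "x$k"]
      by (auto simp: x'_def f_def rvec_def) linarith+
    define C' where "C' = (\<chi> i j. if j = k then v' $ i else C $ i $ j)"
    have "det (rmat C') = det (\<chi> i j. if j = k then (rmat C *v x')$i else rmat C $ i $ j)"
      unfolding v'x'[symmetric] det_if_rmat by (simp add: C'_def det_rmat)
    also have "\<dots> = x'$k * det (rmat C)" by (rule cramer_lemma)
    finally have dC': "real_of_int (det C') = x'$k * real_of_int (det C)" by (simp add: det_rmat)
    have dC: "det C \<noteq> 0" using nC by (simp add: nonsingular_def)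
    have "det C' \<noteq> 0" using dC' dC xk by auto
    moreover have "\<bar>det C'\<bar> < \<bar>det C\<bar>"
    proof -
      have "\<bar>real_of_int (det C')\<bar> = x'$k * \<bar>real_of_int (det C)\<bar>" using dC' xk by (simp add: abs_mult)
      also have "\<dots> < \<bar>real_of_int (det C)\<bar>" using xk dC by simp
      finally show ?thesis by linarith
    qed
    moreover have "C' *v z \<in> L" for z
    proof -
      have "v' \<in> L" unfolding v'_def using vL CL by (rule L_diff)
      then show ?thesis unfolding C'_def col_replace using CL L_add L_smult by blast
    qed
    ultimately have "C' \<in> S" unfolding S_def nonsingular_def by blast
    from Cmin[OF this] \<open>\<bar>det C'\<bar> < \<bar>det C\<bar>\<close> show False by linarith
  qed
  have "\<exists>P. A = C ** P"
  proof (rule cols_factor, rule allI)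
    fix j
    have "A *v axis j 1 = A *v axis j 1 + B *v 0" by simp
    then have "A *v axis j 1 \<in> L" unfolding L_def by blast
    then show "\<exists>w. A *v axis j 1 = C *v w" by (rule span)
  qed
  moreover have "\<exists>P. B = C ** P"
  proof (rule cols_factor, rule allI)
    fix j
    have "B *v axis j 1 = A *v 0 + B *v axis j 1" by simp
    then have "B *v axis j 1 \<in> L" unfolding L_def by blast
    then show "\<exists>w. B *v axis j 1 = C *v w" by (rule span)
  qed
  ultimately have "unimodular C" using cp nC unfolding mat_coprime_def left_divisor_def by blast
  have "\<forall>j. \<exists>x y. axis j 1 = A *v x + B *v y"
  proof
    fix j
    obtain w where "C *v w = axis j 1" using unimodular_surj[OF \<open>unimodular C\<close>] by blast
    then show "\<exists>x y. axis j 1 = A *v x + B *v y" using CL[of w] unfolding L_def by auto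
  qed
  then obtain xs ys where xy: "\<And>j. axis j 1 = A *v xs j + B *v ys j" by metis
  have "A ** (\<chi> i j. xs j $ i) + B ** (\<chi> i j. ys j $ i) = mat 1"
  proof (subst vec_eq_iff, intro allI, subst vec_eq_iff, intro allI)
    fix i j
    have "(A ** (\<chi> i j. xs j $ i) + B ** (\<chi> i j. ys j $ i)) $ i $ j = (axis j 1 :: int ^ 'n) $ i"
      by (simp add: mm_cols xy)
    also have "\<dots> = mat 1 $ i $ j" by (simp add: axis_def mat_def)
    finally show "(A ** (\<chi> i j. xs j $ i) + B ** (\<chi> i j. ys j $ i)) $ i $ j = mat 1 $ i $ j" .
  qed
  then show ?thesis by blast
qed




lemma mv_neg: "(A::int^'n::finite^'m) *v (- u) = - (A *v u)"
  using matrix_vector_mult_diff_distrib[of A 0 u] by simp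

lemma inter_prod:
  fixes A B :: "'n::finite imat"
  assumes nB: "nonsingular B" and cm: "A ** B = B ** A" and bz: "A ** X + B ** Y = mat 1"
    and va: "v = A *v a" and vb: "v = B *v b"
  shows "\<exists>c. v = (A ** B) *v c"
proof -
  define f where "f = (\<lambda>r. rem B (A *v r))"
  have sub: "fund B \<subseteq> f ` fund B"
  proof
    fix t assume t: "t \<in> fund B"
    define r where "r = rem B (X *v t)"
    obtain z where z: "X *v t - r = B *v z" using rem_prop[OF nB, of "X *v t"] unfolding r_def by blast
    have "t = (A ** X + B ** Y) *v t" using bz by simp
    then have e: "(A ** X) *v t = t - (B ** Y) *v t" by (simp add: matrix_vector_mult_add_rdistrib eq_diff_eq)
    have "A *v r = A *v (X *v t) - A *v (B *v z)" using z by (simp add: algebra_simps)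
    also have "\<dots> = t - B *v (Y *v t) - B *v (A *v z)"
      using e cm by (simp add: matrix_vector_mul_assoc)
    finally have "A *v r - t = B *v (- (Y *v t) - A *v z)" by (simp add: algebra_simps mv_neg)
    then have "f r = t" unfolding f_def by (rule rem_eqI[OF nB t])
    moreover have "r \<in> fund B" using rem_prop[OF nB] unfolding r_def by blast
    ultimately show "t \<in> f ` fund B" by blast
  qed
  have inj: "inj_on f (fund B)" by (rule finite_surj_inj[OF fund_finite sub])
  define r where "r = rem B a"
  obtain z where z: "a - r = B *v z" using rem_prop[OF nB, of a] unfolding r_def by blast
  have rf: "r \<in> fund B" using rem_prop[OF nB] unfolding r_def by blast
  have "A *v r = A *v a - A *v (B *v z)" using z by (simp add: algebra_simps)
  also have "\<dots> = B *v (b - A *v z)" using va vb cm by (simp add: matrix_vector_mul_assoc algebra_simps)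
  finally have "A *v r - 0 = B *v (b - A *v z)" by simp
  then have "f r = 0" unfolding f_def by (rule rem_eqI[OF nB zero_fund])
  moreover have "f 0 = 0" unfolding f_def by (rule rem_eqI[OF nB zero_fund, of _ 0]) simp
  ultimately have "r = 0" using inj rf zero_fund by (metis inj_on_eq_iff)
  then have "a = B *v z" using z by simp
  then have "v = (A ** B) *v z" using va by (simp add: matrix_vector_mul_assoc)
  then show ?thesis by blast
qed




lemma mprod_Nil[simp]: "mprod M [] = mat 1" by (simp add: mprod_def)
lemma mprod_Cons[simp]: "mprod M (i # xs) = M i ** mprod M xs" by (simp add: mprod_def)

lemma matrix_add_rdistrib': "((B + C) ** A) = (B ** A) + (C ** (A::int^'n::finite^'n))"
  by (vector matrix_matrix_mult_def sum.distrib[symmetric] field_simps)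

context
  fixes M :: "nat \<Rightarrow> 'n::finite imat" and I :: "nat set"
  assumes ns: "\<forall>i\<in>I. nonsingular (M i)"
    and cm: "\<forall>i\<in>I. \<forall>j\<in>I. M i ** M j = M j ** M i"
    and cp: "\<forall>i\<in>I. \<forall>j\<in>I. i \<noteq> j \<longrightarrow> mat_coprime (M i) (M j)"
begin

lemma mprod_comm: "set xs \<subseteq> I \<Longrightarrow> i \<in> I \<Longrightarrow> M i ** mprod M xs = mprod M xs ** M i"
proof (induction xs)
  case Nil then show ?case by simp
next
  case (Cons j ys)
  have "M i ** mprod M (j # ys) = (M i ** M j) ** mprod M ys" by (simp add: matrix_mul_assoc)
  also have "\<dots> = M j ** (M i ** mprod M ys)" using cm Cons.prems by (simp add: matrix_mul_assoc)
  also have "\<dots> = M j ** (mprod M ys ** M i)" using Cons by simp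
  finally show ?case by (simp add: matrix_mul_assoc)
qed

lemma mprod_nonsing: "set xs \<subseteq> I \<Longrightarrow> nonsingular (mprod M xs)"
proof (induction xs)
  case Nil then show ?case by (simp add: nonsingular_def)
next
  case (Cons j ys)
  then show ?case using ns by (simp add: nonsingular_def det_mul)
qed

lemma mprod_factor: "set xs \<subseteq> I \<Longrightarrow> i \<in> set xs \<Longrightarrow> \<exists>P. mprod M xs = M i ** P"
proof (induction xs)
  case Nil then show ?case by simp
next
  case (Cons j ys)
  show ?case
  proof (cases "j = i")
    case True then show ?thesis by auto
  next
    case False
    then obtain P where "mprod M ys = M i ** P" using Cons by auto
    then have "mprod M (j # ys) = (M j ** M i) ** P" by (simp add: matrix_mul_assoc)
    moreover have "M j ** M i = M i ** M j" using cm Cons.prems by auto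
    ultimately have "mprod M (j # ys) = M i ** (M j ** P)" by (simp add: matrix_mul_assoc)
    then show ?thesis by blast
  qed
qed

lemma mprod_bezout: "set xs \<subseteq> I \<Longrightarrow> i \<in> I \<Longrightarrow> i \<notin> set xs \<Longrightarrow> \<exists>X Y. M i ** X + mprod M xs ** Y = mat 1"
proof (induction xs)
  case Nil
  have "M i ** 0 + mprod M [] ** mat 1 = mat 1" by simp
  then show ?case by blast
next
  case (Cons j ys)
  obtain X1 Y1 where b1: "M i ** X1 + M j ** Y1 = mat 1"
    using bezout[of "M i" "M j"] ns cp Cons.prems by auto
  obtain X2 Y2 where b2: "M i ** X2 + mprod M ys ** Y2 = mat 1" using Cons by auto
  have ij: "M i ** M j = M j ** M i" using cm Cons.prems by auto
  have "M j = M j ** (M i ** X2 + mprod M ys ** Y2)" using b2 by simp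
  also have "\<dots> = M i ** (M j ** X2) + (M j ** mprod M ys) ** Y2"
    by (simp add: matrix_add_ldistrib matrix_mul_assoc ij)
  finally have "M j ** Y1 = (M i ** (M j ** X2) + (M j ** mprod M ys) ** Y2) ** Y1" by simp
  also have "\<dots> = M i ** (M j ** X2 ** Y1) + (M j ** mprod M ys) ** (Y2 ** Y1)"
    by (simp add: matrix_add_rdistrib' matrix_mul_assoc)
  finally have "M i ** (X1 + M j ** X2 ** Y1) + mprod M (j # ys) ** (Y2 ** Y1) = mat 1"
    using b1 by (simp add: matrix_add_ldistrib add.assoc)
  then show ?case by blast
qed

lemma mprod_inter: "set xs \<subseteq> I \<Longrightarrow> distinct xs \<Longrightarrow> \<forall>i\<in>set xs. \<exists>z. v = M i *v z \<Longrightarrow> \<exists>z. v = mprod M xs *v z"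
proof (induction xs)
  case Nil then show ?case by (metis matrix_vector_mul_lid mprod_Nil)
next
  case (Cons i ys)
  obtain b where vb: "v = mprod M ys *v b" using Cons by auto
  obtain a where va: "v = M i *v a" using Cons.prems by auto
  obtain X Y where bz: "M i ** X + mprod M ys ** Y = mat 1" using mprod_bezout[of ys i] Cons.prems by auto
  have "set ys \<subseteq> I" using Cons.prems by auto
  from inter_prod[OF mprod_nonsing[OF this] _ bz va vb] show ?case
    using mprod_comm[of ys i] Cons.prems by auto
qed

end




lemma mv_sum: "(A::int^'n::finite^'m) *v sum g S = (\<Sum>j\<in>S. A *v g j)"
proof (induction S rule: infinite_finite_induct)
  case (infinite A) then show ?case by simp
next
  case empty then show ?case by simp
next
  case (insert x F) then show ?case by (simp add: matrix_vector_right_distrib)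
qed

lemma grp_aux: "(s::'a::ab_group_add) = t + u \<Longrightarrow> t = r - a \<Longrightarrow> m - r = z \<Longrightarrow> s - m = u - a - z"
  by (simp add: algebra_simps)

theorem theorem2:
  fixes M :: "nat \<Rightarrow> int ^ 'n::finite ^ 'n" and L :: nat and U :: "int ^ 'n ^ 'n"
  assumes nonsing: "\<forall>i\<in>{1..L}. nonsingular (M i)"
    and comm: "\<forall>i\<in>{1..L}. \<forall>j\<in>{1..L}. M i ** M j = M j ** M i"
    and copr: "\<forall>i\<in>{1..L}. \<forall>j\<in>{1..L}. i \<noteq> j \<longrightarrow> mat_coprime (M i) (M j)"
    and unim: "unimodular U"
  defines "R \<equiv> mprod M [1..<L+1] ** U"
    and "W \<equiv> (\<lambda>i. mprod M (filter (\<lambda>j. j \<noteq> i) [1..<L+1]))"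
  shows "(\<forall>i\<in>{1..L}. \<exists>Wh Q :: int ^ 'n ^ 'n. W i ** Wh + M i ** Q = mat 1)
    \<and> (\<forall>Wh Q :: nat \<Rightarrow> int ^ 'n ^ 'n.
          (\<forall>i\<in>{1..L}. W i ** Wh i + M i ** Q i = mat 1) \<longrightarrow>
          (\<forall>m\<in>fund R. m = rem R (\<Sum>i=1..L. (W i ** Wh i) *v rem (M i) m)))
    \<and> (\<forall>m\<in>fund R. \<forall>m'\<in>fund R. (\<forall>i\<in>{1..L}. rem (M i) m = rem (M i) m') \<longrightarrow> m = m')"
proof -
  define xs where "xs = [1..<L+1]"
  have setxs: "set xs = {1..L}" and dxs: "distinct xs" unfolding xs_def by auto
  define P where "P = mprod M xs"
  have RP: "R = P ** U" unfolding R_def P_def xs_def ..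
  have Wf: "W i = mprod M (filter (\<lambda>j. j \<noteq> i) xs)" for i unfolding W_def xs_def ..
  note ctx = nonsing comm copr
  have nP: "nonsingular P" unfolding P_def using mprod_nonsing[OF ctx, of xs] setxs by simp
  have nR: "nonsingular R" using nP unim unfolding RP nonsingular_def unimodular_def by (auto simp: det_mul)
  have inter: "\<exists>w. v = R *v w" if H: "\<forall>i\<in>{1..L}. \<exists>z. v = M i *v z" for v
  proof -
    obtain z where "v = P *v z" using mprod_inter[OF ctx, of xs v] setxs dxs H unfolding P_def by auto
    moreover obtain w where "z = U *v w" using unimodular_surj[OF unim, of z] by metis
    ultimately have "v = R *v w" unfolding RP by (simp add: matrix_vector_mul_assoc)
    then show ?thesis by blast
  qed
  have part1: "\<forall>i\<in>{1..L}. \<exists>Wh Q :: int ^ 'n ^ 'n. W i ** Wh + M i ** Q = mat 1"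
  proof
    fix i assume i: "i \<in> {1..L}"
    have s1: "set (filter (\<lambda>j. j \<noteq> i) xs) \<subseteq> {1..L}" unfolding set_filter setxs by blast
    have s2: "i \<notin> set (filter (\<lambda>j. j \<noteq> i) xs)" by simp
    obtain X Y where "M i ** X + mprod M (filter (\<lambda>j. j \<noteq> i) xs) ** Y = mat 1"
      using mprod_bezout[OF ctx s1 i s2] by blast
    then have "W i ** Y + M i ** X = mat 1" unfolding Wf by (metis add.commute)
    then show "\<exists>Wh Q :: int ^ 'n ^ 'n. W i ** Wh + M i ** Q = mat 1" by blast
  qed
  have part2: "\<forall>Wh Q :: nat \<Rightarrow> int ^ 'n ^ 'n.
          (\<forall>i\<in>{1..L}. W i ** Wh i + M i ** Q i = mat 1) \<longrightarrow>
          (\<forall>m\<in>fund R. m = rem R (\<Sum>i=1..L. (W i ** Wh i) *v rem (M i) m))"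
  proof (intro allI impI ballI)
    fix Wh Q :: "nat \<Rightarrow> int ^ 'n ^ 'n" and m
    assume H: "\<forall>i\<in>{1..L}. W i ** Wh i + M i ** Q i = mat 1" and m: "m \<in> fund R"
    define T where "T = (\<lambda>j. (W j ** Wh j) *v rem (M j) m)"
    define s where "s = (\<Sum>i=1..L. T i)"
    have "\<exists>z. s - m = M i *v z" if i: "i \<in> {1..L}" for i
    proof -
      have "\<forall>j\<in>{1..L} - {i}. \<exists>g. T j = M i *v g"
      proof
        fix j assume j: "j \<in> {1..L} - {i}"
        have "set (filter (\<lambda>k. k \<noteq> j) xs) \<subseteq> {1..L}" "i \<in> set (filter (\<lambda>k. k \<noteq> j) xs)"
          unfolding set_filter setxs using i j by auto
        then obtain Pj where "W j = M i ** Pj" using mprod_factor[OF ctx] unfolding Wf by blast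
        then have "T j = M i *v ((Pj ** Wh j) *v rem (M j) m)"
          unfolding T_def by (simp add: matrix_mul_assoc matrix_vector_mul_assoc)
        then show "\<exists>g. T j = M i *v g" by blast
      qed
      then obtain g where g: "\<forall>j\<in>{1..L} - {i}. T j = M i *v g j" by metis
      have "(\<Sum>j\<in>{1..L} - {i}. T j) = M i *v (\<Sum>j\<in>{1..L} - {i}. g j)"
        using g by (simp add: mv_sum)
      moreover have "s = T i + (\<Sum>j\<in>{1..L} - {i}. T j)" unfolding s_def
        using i by (simp add: sum.remove)
      moreover have "T i = rem (M i) m - M i *v (Q i *v rem (M i) m)"
      proof -
        have "W i ** Wh i = mat 1 - M i ** Q i" using H i by (simp add: eq_diff_eq)
        then show ?thesis unfolding T_def
          by (simp add: matrix_vector_mult_diff_rdistrib matrix_vector_mul_assoc)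
      qed
      moreover obtain zi where "m - rem (M i) m = M i *v zi" using rem_prop nonsing i by blast
      ultimately have "s - m = M i *v (\<Sum>j\<in>{1..L} - {i}. g j) - M i *v (Q i *v rem (M i) m) - M i *v zi"
        by (intro grp_aux) simp_all
      then have "s - m = M i *v ((\<Sum>j\<in>{1..L} - {i}. g j) - Q i *v rem (M i) m - zi)"
        by (simp add: matrix_vector_mult_diff_distrib)
      then show ?thesis by blast
    qed
    then obtain w where "s - m = R *v w" using inter by blast
    then have "rem R s = m" by (rule rem_eqI[OF nR m])
    then show "m = rem R (\<Sum>i=1..L. (W i ** Wh i) *v rem (M i) m)" unfolding s_def T_def by simp
  qed
  have part3: "\<forall>m\<in>fund R. \<forall>m'\<in>fund R. (\<forall>i\<in>{1..L}. rem (M i) m = rem (M i) m') \<longrightarrow> m = m'"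
  proof (intro ballI impI)
    fix m m' assume m: "m \<in> fund R" and m': "m' \<in> fund R"
      and H: "\<forall>i\<in>{1..L}. rem (M i) m = rem (M i) m'"
    have "\<exists>z. m' - m = M i *v z" if i: "i \<in> {1..L}" for i
    proof -
      obtain z where z: "m - rem (M i) m = M i *v z" using rem_prop nonsing i by blast
      obtain z' where z': "m' - rem (M i) m' = M i *v z'" using rem_prop nonsing i by blast
      have "m' - m = M i *v (z' - z)" using z z' H i by (simp add: matrix_vector_mult_diff_distrib algebra_simps)
      then show ?thesis by blast
    qed
    then obtain w where "m' - m = R *v w" using inter by blast
    then have "rem R m' = m" by (rule rem_eqI[OF nR m])
    moreover have "rem R m' = m'" by (rule rem_eqI[OF nR m', of _ 0]) simp
    ultimately show "m = m'" by simp
  qed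
  show ?thesis using part1 part2 part3 by blast
qed


end
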